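(* Let $\mathcal{G}=(G,<,+,0,\ldots)$ be an o-minimal expansion of an ordered abelian group, let $X\subseteq G^{m+n}$ be definable, let $\mathcal{D}$ be a cell decomposition of $G^{m+n}$ partitioning $X$ (i.e. $X$ is a union of cells of $\mathcal{D}$), and let $\pi:G^{m+n}\to G^m$ be the projection onto the first $m$ coordinates. Assume that no cell involved is exceptional. Then for every cell $A\in\pi(\mathcal{D})$ there is an integer $e_A$ such that $\chi_b(X\cap\pi^{-1}(a))=e_A$ for all $a\in A$, and $\chi_b(X\cap\pi^{-1}(A))=\chi_b(A)\,e_A$.
   Context: Cells and cell decompositions are in the sense of o-minimal structures; $\pi(\mathcal{D})=\{\pi(C)\mid C\in\mathcal{D}\}$ is the induced cell decomposition of $G^m$. For $k\le N$ let $p_k:G^N\to G^k$ be the projection onto the first $k$ coordinates. A cell $C\subseteq G^N$ is exceptional if there exist $k$ and a cell $A\subseteq G^{k-1}$ with $p_k(C)=A\times G$. A non-exceptional cell $C$ is bad if there exist $k$, a cell $A\subseteq G^{k-1}$ and a definable $f:A\to G$ with $p_k(C)=\{(x,t)\in A\times G\mid t<f(x)\}$ or $\{(x,t)\in A\times G\mid f(x)<t\}$. A cell is good if it is neither exceptional nor bad. For a definable $Z\subseteq G^N$, $\chi_b(Z)$ is defined by choosing a finite partition $\mathcal{F}$ of $Z$ into non-exceptional cells and setting $\chi_b(Z)=\sum_{C\in\mathcal{F},\,C\text{ good}}(-1)^{\dim C}$ (which is $0$ if there is no good cell); this is independent of the choice of $\mathcal{F}$. *)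

theory Defs
  imports Main
begin

text \<open>Points of G^n are lists of length n. A (first-order, with parameters) structure on G
  is given by the families Def n of definable subsets of G^n.\<close>

definition Gpow :: "nat \<Rightarrow> 'g list set" where
  "Gpow n = {xs. length xs = n}"

definition omin_group_expansion :: "(nat \<Rightarrow> ('g::linordered_ab_group_add) list set set) \<Rightarrow> bool" where
  "omin_group_expansion Def \<longleftrightarrow>
     \<comment> \<open>dense linear order without endpoints\<close>
     (\<forall>x y::'g. x < y \<longrightarrow> (\<exists>z. x < z \<and> z < y)) \<and>
     (\<forall>x::'g. \<exists>y z. y < x \<and> x < z) \<and>
     \<comment> \<open>structure axioms (van den Dries)\<close>
     (\<forall>n. \<forall>A\<in>Def n. A \<subseteq> Gpow n) \<and>
     (\<forall>n. Gpow n \<in> Def n) \<and>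
     (\<forall>n. \<forall>A\<in>Def n. \<forall>B\<in>Def n. A \<union> B \<in> Def n) \<and>
     (\<forall>n. \<forall>A\<in>Def n. Gpow n - A \<in> Def n) \<and>
     (\<forall>n. \<forall>A\<in>Def n. {xs @ [t] | xs t. xs \<in> A} \<in> Def (Suc n)) \<and>
     (\<forall>n. \<forall>A\<in>Def n. {t # xs | xs t. xs \<in> A} \<in> Def (Suc n)) \<and>
     (\<forall>n i j. i < n \<longrightarrow> j < n \<longrightarrow> {xs \<in> Gpow n. xs ! i = xs ! j} \<in> Def n) \<and>
     (\<forall>n. \<forall>A\<in>Def (Suc n). butlast ` A \<in> Def n) \<and>
     \<comment> \<open>parameters, order and group operation are definable\<close>
     (\<forall>a. {[a]} \<in> Def 1) \<and>
     {[x, y] | x y. x < y} \<in> Def 2 \<and>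
     {[x, y, z] | x y z. z = x + y} \<in> Def 3 \<and>
     \<comment> \<open>o-minimality: definable subsets of G are finite unions of points and open intervals
         (endpoints in G \<union> {-\<infinity>,+\<infinity>}, encoded by None)\<close>
     (\<forall>S\<in>Def 1. \<exists>I. finite I \<and> (\<Union>I) = {x. [x] \<in> S} \<and>
        (\<forall>U\<in>I. (\<exists>a. U = {a}) \<or>
          (\<exists>lo hi. U = {x. (\<forall>a\<in>set_option lo. a < x) \<and> (\<forall>b\<in>set_option hi. x < b)})))"

definition def_fun :: "(nat \<Rightarrow> 'g list set set) \<Rightarrow> nat \<Rightarrow> 'g list set \<Rightarrow> ('g list \<Rightarrow> 'g) \<Rightarrow> bool" where
  "def_fun Def n A f \<longleftrightarrow> {xs @ [f xs] | xs. xs \<in> A} \<in> Def (Suc n)"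

text \<open>Continuity on A w.r.t. the (product of the) order topology; for an ordered group the
  order topology is the one generated by symmetric intervals.\<close>
definition cont_on_G :: "nat \<Rightarrow> ('g::linordered_ab_group_add) list set \<Rightarrow> ('g list \<Rightarrow> 'g) \<Rightarrow> bool" where
  "cont_on_G n A f \<longleftrightarrow> (\<forall>a\<in>A. \<forall>e>0. \<exists>d>0. \<forall>y\<in>A.
       (\<forall>i<n. - d < y ! i - a ! i \<and> y ! i - a ! i < d) \<longrightarrow> - e < f y - f a \<and> f y - f a < e)"

text \<open>Cells: cellD Def n d C means C \<subseteq> G^n is a cell of dimension d.  Bands have lower/upper
  boundaries that are continuous definable functions or -\<infinity>/+\<infinity> (None).\<close>
inductive cellD :: "(nat \<Rightarrow> ('g::linordered_ab_group_add) list set set) \<Rightarrow> nat \<Rightarrow> nat \<Rightarrow> 'g list set \<Rightarrow> bool"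
  for Def where
  base: "cellD Def 0 0 {[]}"
| graph: "cellD Def n d C \<Longrightarrow> def_fun Def n C f \<Longrightarrow> cont_on_G n C f \<Longrightarrow>
      cellD Def (Suc n) d {xs @ [f xs] | xs. xs \<in> C}"
| band: "cellD Def n d C \<Longrightarrow>
      (\<forall>f\<in>set_option lo. def_fun Def n C f \<and> cont_on_G n C f) \<Longrightarrow>
      (\<forall>g\<in>set_option hi. def_fun Def n C g \<and> cont_on_G n C g) \<Longrightarrow>
      (\<forall>f\<in>set_option lo. \<forall>g\<in>set_option hi. \<forall>xs\<in>C. f xs < g xs) \<Longrightarrow>
      cellD Def (Suc n) (Suc d)
        {xs @ [t] | xs t. xs \<in> C \<and> (\<forall>f\<in>set_option lo. f xs < t) \<and> (\<forall>g\<in>set_option hi. t < g xs)}"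

definition is_cell :: "(nat \<Rightarrow> ('g::linordered_ab_group_add) list set set) \<Rightarrow> nat \<Rightarrow> 'g list set \<Rightarrow> bool" where
  "is_cell Def n C \<longleftrightarrow> (\<exists>d. cellD Def n d C)"

definition cell_dim :: "(nat \<Rightarrow> ('g::linordered_ab_group_add) list set set) \<Rightarrow> nat \<Rightarrow> 'g list set \<Rightarrow> nat" where
  "cell_dim Def n C = (THE d. cellD Def n d C)"

definition proj :: "nat \<Rightarrow> 'g list set \<Rightarrow> 'g list set" where
  "proj k C = take k ` C"

definition exceptional :: "(nat \<Rightarrow> ('g::linordered_ab_group_add) list set set) \<Rightarrow> nat \<Rightarrow> 'g list set \<Rightarrow> bool" where
  "exceptional Def N C \<longleftrightarrow> (\<exists>k. 1 \<le> k \<and> k \<le> N \<and> (\<exists>A. is_cell Def (k - 1) A \<and>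
      proj k C = {xs @ [t] | xs t. xs \<in> A}))"

definition bad :: "(nat \<Rightarrow> ('g::linordered_ab_group_add) list set set) \<Rightarrow> nat \<Rightarrow> 'g list set \<Rightarrow> bool" where
  "bad Def N C \<longleftrightarrow> \<not> exceptional Def N C \<and>
    (\<exists>k. 1 \<le> k \<and> k \<le> N \<and> (\<exists>A f. is_cell Def (k - 1) A \<and> def_fun Def (k - 1) A f \<and>
      (proj k C = {xs @ [t] | xs t. xs \<in> A \<and> t < f xs} \<or>
       proj k C = {xs @ [t] | xs t. xs \<in> A \<and> f xs < t})))"

definition good :: "(nat \<Rightarrow> ('g::linordered_ab_group_add) list set set) \<Rightarrow> nat \<Rightarrow> 'g list set \<Rightarrow> bool" where
  "good Def N C \<longleftrightarrow> \<not> exceptional Def N C \<and> \<not> bad Def N C"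

definition nonexc_partition :: "(nat \<Rightarrow> ('g::linordered_ab_group_add) list set set) \<Rightarrow> nat \<Rightarrow> 'g list set \<Rightarrow> 'g list set set \<Rightarrow> bool" where
  "nonexc_partition Def N Z F \<longleftrightarrow> finite F \<and> \<Union>F = Z \<and>
     (\<forall>C\<in>F. \<forall>C'\<in>F. C \<noteq> C' \<longrightarrow> C \<inter> C' = {}) \<and>
     (\<forall>C\<in>F. is_cell Def N C \<and> \<not> exceptional Def N C)"

text \<open>chi_b, computed from some partition into non-exceptional cells (the paper states that
  the value does not depend on the choice).\<close>
definition chi_b :: "(nat \<Rightarrow> ('g::linordered_ab_group_add) list set set) \<Rightarrow> nat \<Rightarrow> 'g list set \<Rightarrow> int" where
  "chi_b Def N Z = (let F = (SOME F. nonexc_partition Def N Z F) in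
     (\<Sum>C\<in>{C\<in>F. good Def N C}. (-1) ^ cell_dim Def N C))"

fun cell_decomp :: "(nat \<Rightarrow> ('g::linordered_ab_group_add) list set set) \<Rightarrow> nat \<Rightarrow> 'g list set set \<Rightarrow> bool" where
  "cell_decomp Def 0 D \<longleftrightarrow> D = {{[]}}"
| "cell_decomp Def (Suc n) D \<longleftrightarrow> finite D \<and> \<Union>D = Gpow (Suc n) \<and>
     (\<forall>C\<in>D. \<forall>C'\<in>D. C \<noteq> C' \<longrightarrow> C \<inter> C' = {}) \<and>
     (\<forall>C\<in>D. is_cell Def (Suc n) C) \<and>
     cell_decomp Def n (proj n ` D)"

end

theory Submission
  imports Defs
begin

lemma cellD_len: "cellD Def n d C \<Longrightarrow> C \<subseteq> Gpow n"
  by (induction rule: cellD.induct) (auto simp: Gpow_def)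

lemma cellD_Suc_cases:
  assumes "cellD Def (Suc n) d C"
  shows "(\<exists>B f. cellD Def n d B \<and> def_fun Def n B f \<and> cont_on_G n B f \<and>
            C = {xs @ [f xs] | xs. xs \<in> B}) \<or>
         (\<exists>dB B lo hi. cellD Def n dB B \<and> d = Suc dB \<and>
            (\<forall>f\<in>set_option lo. def_fun Def n B f \<and> cont_on_G n B f) \<and>
            (\<forall>g\<in>set_option hi. def_fun Def n B g \<and> cont_on_G n B g) \<and>
            (\<forall>f\<in>set_option lo. \<forall>g\<in>set_option hi. \<forall>xs\<in>B. f xs < g xs) \<and>
            C = {xs @ [t] | xs t. xs \<in> B \<and> (\<forall>f\<in>set_option lo. f xs < t) \<and> (\<forall>g\<in>set_option hi. t < g xs)})"
  using assms by (cases rule: cellD.cases) blast+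


lemma cellD_SucE:
  assumes "cellD Def (Suc n) d C"
  obtains (graph) B f where "cellD Def n d B" "def_fun Def n B f" "cont_on_G n B f"
            "C = {xs @ [f xs] | xs. xs \<in> B}"
  | (band) dB B lo hi where "cellD Def n dB B" "d = Suc dB"
            "\<forall>f\<in>set_option lo. def_fun Def n B f \<and> cont_on_G n B f"
            "\<forall>g\<in>set_option hi. def_fun Def n B g \<and> cont_on_G n B g"
            "\<forall>f\<in>set_option lo. \<forall>g\<in>set_option hi. \<forall>xs\<in>B. f xs < g xs"
            "C = {xs @ [t] | xs t. xs \<in> B \<and> (\<forall>f\<in>set_option lo. f xs < t) \<and> (\<forall>g\<in>set_option hi. t < g xs)}"
  using assms by (cases rule: cellD.cases) auto

lemma cellD_0: assumes "cellD Def 0 d C" shows "C = {[]} \<and> d = 0"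
  using assms by (cases rule: cellD.cases) auto

lemma proj_full: "C \<subseteq> Gpow N \<Longrightarrow> proj N C = C"
  unfolding proj_def Gpow_def by (force simp: subset_iff image_iff)

lemma proj_proj: "k \<le> N \<Longrightarrow> proj k (proj N C) = proj k C"
  by (auto simp: proj_def image_image min_def)

lemma excep_iff: "exceptional Def N C \<longleftrightarrow> (\<exists>k. 1 \<le> k \<and> k \<le> N \<and> (\<exists>A. is_cell Def (k - 1) A \<and>
      proj k C = {xs @ [t] | xs t. xs \<in> A}))"
  by (simp add: exceptional_def)

definition excat where "excat Def k C \<longleftrightarrow> (\<exists>A. is_cell Def (k - 1) A \<and>
      proj k C = {xs @ [t] | xs t. xs \<in> A})"

definition badat where "badat Def k C \<longleftrightarrow> (\<exists>A f. is_cell Def (k - 1) A \<and> def_fun Def (k - 1) A f \<and>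
      (proj k C = {xs @ [t] | xs t. xs \<in> A \<and> t < f xs} \<or>
       proj k C = {xs @ [t] | xs t. xs \<in> A \<and> f xs < t}))"

lemma exc_alt: "exceptional Def N C \<longleftrightarrow> (\<exists>k. 1 \<le> k \<and> k \<le> N \<and> excat Def k C)"
  by (simp add: exceptional_def excat_def)

lemma good_alt: "good Def N C \<longleftrightarrow> \<not> exceptional Def N C \<and> \<not> (\<exists>k. 1 \<le> k \<and> k \<le> N \<and> badat Def k C)"
  by (auto simp: good_def bad_def badat_def)

lemma excat_proj: "k \<le> N \<Longrightarrow> excat Def k (proj N C) = excat Def k C"
  by (simp add: excat_def proj_proj)

lemma badat_proj: "k \<le> N \<Longrightarrow> badat Def k (proj N C) = badat Def k C"
  by (simp add: badat_def proj_proj)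

lemma exc_Suc:
  assumes "C \<subseteq> Gpow (Suc N)"
  shows "exceptional Def (Suc N) C \<longleftrightarrow> exceptional Def N (proj N C) \<or> excat Def (Suc N) C"
  unfolding exc_alt
  by (metis excat_proj le_Suc_eq le_SucI Suc_le_mono One_nat_def le_add1 plus_1_eq_Suc)

lemma good_Suc:
  assumes "C \<subseteq> Gpow (Suc N)"
  shows "good Def (Suc N) C \<longleftrightarrow> good Def N (proj N C) \<and> \<not> excat Def (Suc N) C \<and> \<not> badat Def (Suc N) C"
proof -
  have "(\<exists>k. 1 \<le> k \<and> k \<le> Suc N \<and> badat Def k C) \<longleftrightarrow>
        (\<exists>k. 1 \<le> k \<and> k \<le> N \<and> badat Def k (proj N C)) \<or> badat Def (Suc N) C"
    by (metis badat_proj le_Suc_eq le_SucI Suc_le_mono One_nat_def le_add1 plus_1_eq_Suc)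
  then show ?thesis unfolding good_alt exc_Suc[OF assms] by blast
qed


locale dlo =
  fixes Def :: "nat \<Rightarrow> ('g::linordered_ab_group_add) list set set"
  assumes dn: "\<And>x y::'g. x < y \<Longrightarrow> \<exists>z. x < z \<and> z < y"
    and ne: "\<And>x::'g. \<exists>y z. y < x \<and> x < z"
begin

lemma fib2:
  assumes "\<forall>f\<in>set_option lo. \<forall>g\<in>set_option hi. f x < (g x::'g)"
  shows "\<exists>t1 t2. t1 < t2 \<and> (\<forall>f\<in>set_option lo. f x < t1) \<and> (\<forall>g\<in>set_option hi. t2 < g x)"
proof (cases lo)
  case None
  note lN = None
  show ?thesis
  proof (cases hi)
    case None
    obtain y z where "y < (0::'g)" "0 < (z::'g)" using ne[of 0] by blast
    then show ?thesis using lN None by (intro exI[of _ y] exI[of _ z]) auto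
  next
    case (Some g)
    obtain y z where "y < g x" using ne[of "g x"] by blast
    moreover obtain w where "w < y" using ne[of y] by blast
    ultimately show ?thesis using lN Some by (intro exI[of _ w] exI[of _ y]) auto
  qed
next
  case (Some f)
  note lS = Some
  show ?thesis
  proof (cases hi)
    case None
    obtain z where "f x < z" using ne[of "f x"] by blast
    moreover obtain w where "z < w" using ne[of z] by blast
    ultimately show ?thesis using lS None by (intro exI[of _ z] exI[of _ w]) auto
  next
    case (Some g)
    then have "f x < g x" using assms lS by auto
    then obtain z where z: "f x < z" "z < g x" using dn by blast
    then obtain w where "z < w" "w < g x" using dn by blast
    then show ?thesis using lS Some z by (intro exI[of _ z] exI[of _ w]) auto
  qed
qed

lemma fib1:
  assumes "\<forall>f\<in>set_option lo. \<forall>g\<in>set_option hi. f x < (g x::'g)"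
  shows "\<exists>t. (\<forall>f\<in>set_option lo. f x < t) \<and> (\<forall>g\<in>set_option hi. t < g x)"
proof -
  obtain t1 t2 where "t1 < t2" "\<forall>f\<in>set_option lo. f x < t1" "\<forall>g\<in>set_option hi. t2 < g x"
    using fib2[OF assms] by blast
  then show ?thesis by (intro exI[of _ t1]) (auto intro: less_trans)
qed

lemma cellD_ne: "cellD Def n d C \<Longrightarrow> C \<noteq> {}"
proof (induction rule: cellD.induct)
  case base then show ?case by simp
next
  case (graph n d C f) then show ?case by auto
next
  case (band n d C lo hi)
  then obtain x where x: "x \<in> C" by auto
  then obtain t where "(\<forall>f\<in>set_option lo. f x < t) \<and> (\<forall>g\<in>set_option hi. t < g x)"
    using fib1[of lo hi x] band.hyps(4) by blast
  then show ?case using x by blast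
qed

lemma proj_graph: "B \<subseteq> Gpow n \<Longrightarrow> proj n {xs @ [f xs] | xs. xs \<in> B} = B"
  unfolding proj_def Gpow_def by (force simp: subset_iff image_iff)

lemma proj_band:
  assumes "B \<subseteq> Gpow n" "\<forall>f\<in>set_option lo. \<forall>g\<in>set_option hi. \<forall>xs\<in>B. f xs < (g xs::'g)"
  shows "proj n {xs @ [t] | xs t. xs \<in> B \<and> (\<forall>f\<in>set_option lo. f xs < t) \<and> (\<forall>g\<in>set_option hi. t < g xs)} = B"
proof
  show "proj n {xs @ [t] | xs t. xs \<in> B \<and> (\<forall>f\<in>set_option lo. f xs < t) \<and> (\<forall>g\<in>set_option hi. t < g xs)} \<subseteq> B"
    using assms(1) unfolding proj_def Gpow_def by (force simp: subset_iff)
  show "B \<subseteq> proj n {xs @ [t] | xs t. xs \<in> B \<and> (\<forall>f\<in>set_option lo. f xs < t) \<and> (\<forall>g\<in>set_option hi. t < g xs)}"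
  proof
    fix x assume x: "x \<in> B"
    then obtain t where t: "(\<forall>f\<in>set_option lo. f x < t) \<and> (\<forall>g\<in>set_option hi. t < g x)"
      using fib1[of lo hi x] assms(2) by blast
    have "length x = n" using x assms(1) by (auto simp: Gpow_def)
    then have "x = take n (x @ [t])" by simp
    then show "x \<in> proj n {xs @ [t] | xs t. xs \<in> B \<and> (\<forall>f\<in>set_option lo. f xs < t) \<and> (\<forall>g\<in>set_option hi. t < g xs)}"
      unfolding proj_def using x t by blast
  qed
qed

lemma graph_band_disj:
  assumes "B' \<noteq> {}" "\<forall>f\<in>set_option lo. \<forall>g\<in>set_option hi. \<forall>xs\<in>B'. f xs < (g xs::'g)"
  shows "{xs @ [f xs] | xs. xs \<in> B} \<noteq> {xs @ [t] | xs t. xs \<in> B' \<and> (\<forall>f\<in>set_option lo. f xs < t) \<and> (\<forall>g\<in>set_option hi. t < g xs)}"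
proof
  assume eq: "{xs @ [f xs] | xs. xs \<in> B} = {xs @ [t] | xs t. xs \<in> B' \<and> (\<forall>f\<in>set_option lo. f xs < t) \<and> (\<forall>g\<in>set_option hi. t < g xs)}"
  obtain x where x: "x \<in> B'" using assms(1) by auto
  obtain t1 t2 where t: "t1 < t2" "\<forall>f\<in>set_option lo. f x < t1" "\<forall>g\<in>set_option hi. t2 < g x"
    using fib2[of lo hi x] assms(2) x by blast
  have "x @ [t1] \<in> {xs @ [t] | xs t. xs \<in> B' \<and> (\<forall>f\<in>set_option lo. f xs < t) \<and> (\<forall>g\<in>set_option hi. t < g xs)}"
    using x t by (auto intro: less_trans)
  then have 1: "t1 = f x" using eq by auto
  have "x @ [t2] \<in> {xs @ [t] | xs t. xs \<in> B' \<and> (\<forall>f\<in>set_option lo. f xs < t) \<and> (\<forall>g\<in>set_option hi. t < g xs)}"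
    using x t by (auto intro: less_trans)
  then have 2: "t2 = f x" using eq by auto
  show False using 1 2 t(1) by simp
qed

lemma cellD_unique: "cellD Def n d C \<Longrightarrow> cellD Def n d' C \<Longrightarrow> d = d'"
proof (induction arbitrary: d' rule: cellD.induct)
  case base then show ?case using cellD_0 by blast
next
  case (graph n d C f)
  from graph.prems show ?case
  proof (cases rule: cellD_SucE)
    case (graph B f')
    have "C = B" using proj_graph[OF cellD_len[OF graph.hyps(1)], of f] proj_graph[OF cellD_len[OF graph(1)], of f'] graph(4) by simp
    then show ?thesis using graph.IH graph(1) by simp
  next
    case (band dB B lo hi)
    have False using graph_band_disj[OF cellD_ne[OF band(1)] band(5), of f C] band(6) by simp
    then show ?thesis ..
  qed
next
  case (band n d C lo hi)
  from band.prems show ?case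
  proof (cases rule: cellD_SucE)
    case (graph B f')
    have False using graph_band_disj[OF cellD_ne[OF band.hyps(1)] band.hyps(4), of f' B] graph(4) by simp
    then show ?thesis ..
  next
    case (band dB B lo' hi')
    have "C = B" using proj_band[OF cellD_len[OF band.hyps(1)] band.hyps(4)] proj_band[OF cellD_len[OF band(1)] band(5)] band(6) by simp
    then show ?thesis using band.IH band(1,2) by simp
  qed
qed

lemma cell_dim_eq: "cellD Def n d C \<Longrightarrow> cell_dim Def n C = d"
  unfolding cell_dim_def using cellD_unique by blast

end

definition wt :: "(nat \<Rightarrow> ('g::linordered_ab_group_add) list set set) \<Rightarrow> nat \<Rightarrow> 'g list set \<Rightarrow> int" where
  "wt Def N C = (if good Def N C then (-1) ^ cell_dim Def N C else 0)"

definition bw :: "'a option \<Rightarrow> 'b option \<Rightarrow> int" where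
  "bw lo hi = (if lo \<noteq> None then -1 else 0) + (if hi = None then 1 else 0)"

context dlo begin

lemma graph_facts:
  assumes B: "cellD Def N d B" and C: "C = {xs @ [f xs] | xs. xs \<in> B}"
  shows "\<not> excat Def (Suc N) C" "\<not> badat Def (Suc N) C" "proj N C = B" "C \<subseteq> Gpow (Suc N)"
proof -
  have BG: "B \<subseteq> Gpow N" using cellD_len[OF B] .
  show CG: "C \<subseteq> Gpow (Suc N)" using BG C by (auto simp: Gpow_def)
  show "proj N C = B" using proj_graph[OF BG] C by simp
  obtain x where x: "x \<in> B" using cellD_ne[OF B] by auto
  have xC: "x @ [f x] \<in> C" using x C by auto
  have pC: "proj (Suc N) C = C" using proj_full[OF CG] .
  show "\<not> excat Def (Suc N) C"
  proof
    assume "excat Def (Suc N) C"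
    then obtain A where eq: "C = {xs @ [t] | xs t. xs \<in> A}" unfolding excat_def pC by auto
    have xA: "x \<in> A" using xC eq by auto
    obtain z where z: "f x < z" using ne[of "f x"] by blast
    have "x @ [z] \<in> C" using eq xA by auto
    then show False using C z by auto
  qed
  show "\<not> badat Def (Suc N) C"
  proof
    assume "badat Def (Suc N) C"
    then obtain A h where eq: "C = {xs @ [t] | xs t. xs \<in> A \<and> t < h xs} \<or> C = {xs @ [t] | xs t. xs \<in> A \<and> h xs < t}"
      unfolding badat_def pC by auto
    then show False
    proof
      assume eq: "C = {xs @ [t] | xs t. xs \<in> A \<and> t < h xs}"
      have xA: "x \<in> A" "f x < h x" using xC eq by auto
      obtain z where z: "z < f x" using ne[of "f x"] by blast
      have "x @ [z] \<in> C" using eq xA z by auto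
      then show False using C z by auto
    next
      assume eq: "C = {xs @ [t] | xs t. xs \<in> A \<and> h xs < t}"
      have xA: "x \<in> A" "h x < f x" using xC eq by auto
      obtain z where z: "f x < z" using ne[of "f x"] by blast
      have "x @ [z] \<in> C" using eq xA z by auto
      then show False using C z by auto
    qed
  qed
qed

lemma LD_graph:
  assumes B: "cellD Def N d B" and C: "C = {xs @ [f xs] | xs. xs \<in> B}"
    and f: "def_fun Def N B f" "cont_on_G N B f"
  shows "exceptional Def (Suc N) C \<longleftrightarrow> exceptional Def N B"
    "wt Def (Suc N) C = wt Def N B"
proof -
  note gf = graph_facts[OF B C]
  show "exceptional Def (Suc N) C \<longleftrightarrow> exceptional Def N B"
    using exc_Suc[OF gf(4)] gf by simp
  have cd: "cellD Def (Suc N) d C" using cellD.graph[OF B f] C by simp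
  show "wt Def (Suc N) C = wt Def N B"
    unfolding wt_def good_Suc[OF gf(4)] gf(3) using gf cell_dim_eq[OF cd] cell_dim_eq[OF B] by simp
qed

lemma band_facts:
  assumes B: "cellD Def N dB B"
    and lo: "\<forall>f\<in>set_option lo. def_fun Def N B f \<and> cont_on_G N B f"
    and hi: "\<forall>g\<in>set_option hi. def_fun Def N B g \<and> cont_on_G N B g"
    and lh: "\<forall>f\<in>set_option lo. \<forall>g\<in>set_option hi. \<forall>xs\<in>B. f xs < g xs"
    and C: "C = {xs @ [t] | xs t. xs \<in> B \<and> (\<forall>f\<in>set_option lo. f xs < t) \<and> (\<forall>g\<in>set_option hi. t < g xs)}"
  shows "excat Def (Suc N) C \<longleftrightarrow> lo = None \<and> hi = None"
    "\<not> (lo = None \<and> hi = None) \<Longrightarrow> badat Def (Suc N) C \<longleftrightarrow> \<not> (lo \<noteq> None \<and> hi \<noteq> None)"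
    "proj N C = B" "C \<subseteq> Gpow (Suc N)"
proof -
  have BG: "B \<subseteq> Gpow N" using cellD_len[OF B] .
  show CG: "C \<subseteq> Gpow (Suc N)" using BG C by (auto simp: Gpow_def)
  show "proj N C = B" using proj_band[OF BG lh] C by simp
  obtain x where x: "x \<in> B" using cellD_ne[OF B] by auto
  obtain t0 where t0: "(\<forall>f\<in>set_option lo. f x < t0) \<and> (\<forall>g\<in>set_option hi. t0 < g x)"
    using fib1[of lo hi x] lh x by blast
  have xC: "x @ [t0] \<in> C" using x C t0 by auto
  have pC: "proj (Suc N) C = C" using proj_full[OF CG] .
  show "excat Def (Suc N) C \<longleftrightarrow> lo = None \<and> hi = None"
  proof
    assume "excat Def (Suc N) C"
    then obtain A where eq: "C = {xs @ [t] | xs t. xs \<in> A}" unfolding excat_def pC by auto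
    have xA: "x \<in> A" using xC eq by auto
    show "lo = None \<and> hi = None"
    proof (cases lo)
      case (Some f)
      have "x @ [f x] \<in> C" using eq xA by auto
      then have False using C Some by auto
      then show ?thesis ..
    next
      case None
      show ?thesis
      proof (cases hi)
        case (Some g)
        have "x @ [g x] \<in> C" using eq xA by auto
        then have False using C Some by auto
        then show ?thesis ..
      qed (simp add: None)
    qed
  next
    assume "lo = None \<and> hi = None"
    then have "C = {xs @ [t] | xs t. xs \<in> B}" using C by simp
    then show "excat Def (Suc N) C" unfolding excat_def pC is_cell_def using B by auto
  qed
  assume nn: "\<not> (lo = None \<and> hi = None)"
  show "badat Def (Suc N) C \<longleftrightarrow> \<not> (lo \<noteq> None \<and> hi \<noteq> None)"
  proof (cases lo)
    case None
    then obtain g where g: "hi = Some g" using nn by auto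
    have "C = {xs @ [t] | xs t. xs \<in> B \<and> t < g xs}" using C None g by simp
    then have "badat Def (Suc N) C" unfolding badat_def pC is_cell_def using B hi g by auto
    then show ?thesis using None by simp
  next
    case (Some f)
    note fS = Some
    show ?thesis
    proof (cases hi)
      case None
      have "C = {xs @ [t] | xs t. xs \<in> B \<and> f xs < t}" using C None fS by simp
      then have "badat Def (Suc N) C" unfolding badat_def pC is_cell_def using B lo fS by auto
      then show ?thesis using None by simp
    next
      case (Some g)
      have "\<not> badat Def (Suc N) C"
      proof
        assume "badat Def (Suc N) C"
        then obtain A h where eq: "C = {xs @ [t] | xs t. xs \<in> A \<and> t < h xs} \<or> C = {xs @ [t] | xs t. xs \<in> A \<and> h xs < t}"
          unfolding badat_def pC by auto
        have t0': "f x < t0" "t0 < g x" using t0 fS Some by auto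
        from eq show False
        proof
          assume eq: "C = {xs @ [t] | xs t. xs \<in> A \<and> t < h xs}"
          have xA: "x \<in> A" "t0 < h x" using xC eq by auto
          have "x @ [f x] \<in> C" using eq xA t0' by auto
          then show False using C fS by auto
        next
          assume eq: "C = {xs @ [t] | xs t. xs \<in> A \<and> h xs < t}"
          have xA: "x \<in> A" "h x < t0" using xC eq by auto
          have "x @ [g x] \<in> C" using eq xA t0' by auto
          then show False using C Some by auto
        qed
      qed
      then show ?thesis using fS Some by simp
    qed
  qed
qed

lemma LD_band:
  assumes B: "cellD Def N dB B"
    and lo: "\<forall>f\<in>set_option lo. def_fun Def N B f \<and> cont_on_G N B f"
    and hi: "\<forall>g\<in>set_option hi. def_fun Def N B g \<and> cont_on_G N B g"
    and lh: "\<forall>f\<in>set_option lo. \<forall>g\<in>set_option hi. \<forall>xs\<in>B. f xs < g xs"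
    and C: "C = {xs @ [t] | xs t. xs \<in> B \<and> (\<forall>f\<in>set_option lo. f xs < t) \<and> (\<forall>g\<in>set_option hi. t < g xs)}"
  shows "exceptional Def (Suc N) C \<longleftrightarrow> exceptional Def N B \<or> (lo = None \<and> hi = None)"
    "\<not> exceptional Def (Suc N) C \<Longrightarrow> wt Def (Suc N) C = wt Def N B * bw lo hi"
proof -
  note bf = band_facts[OF B lo hi lh C]
  show ex: "exceptional Def (Suc N) C \<longleftrightarrow> exceptional Def N B \<or> (lo = None \<and> hi = None)"
    using exc_Suc[OF bf(4)] bf by simp
  assume nex: "\<not> exceptional Def (Suc N) C"
  then have nn: "\<not> (lo = None \<and> hi = None)" using ex by simp
  have cd: "cellD Def (Suc N) (Suc dB) C" using cellD.band[OF B lo hi lh] C by simp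
  have g: "good Def (Suc N) C \<longleftrightarrow> good Def N B \<and> lo \<noteq> None \<and> hi \<noteq> None"
    unfolding good_Suc[OF bf(4)] bf(3) using bf(1) bf(2)[OF nn] nn by blast
  show "wt Def (Suc N) C = wt Def N B * bw lo hi"
    unfolding wt_def g cell_dim_eq[OF cd] cell_dim_eq[OF B] bw_def using nn by auto
qed

end

fun ind :: "('g::linorder) + ('g option \<times> 'g option) \<Rightarrow> 'g \<Rightarrow> int" where
  "ind (Inl a) t = (if t = a then 1 else 0)"
| "ind (Inr (l, h)) t = (if (\<forall>x\<in>set_option l. x < t) \<and> (\<forall>y\<in>set_option h. t < y) then 1 else 0)"

fun germ :: "('g::linorder) + ('g option \<times> 'g option) \<Rightarrow> 'g \<Rightarrow> int" where
  "germ (Inl a) t = 0"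
| "germ (Inr (l, h)) t = (if (\<forall>x\<in>set_option l. x \<le> t) \<and> (\<forall>y\<in>set_option h. t < y) then 1 else 0)"

fun topv :: "('g::linorder) + ('g option \<times> 'g option) \<Rightarrow> int" where
  "topv (Inl a) = 0"
| "topv (Inr (l, h)) = (if h = None then 1 else 0)"

fun psi :: "('g::linorder) + ('g option \<times> 'g option) \<Rightarrow> int" where
  "psi (Inl a) = 1"
| "psi (Inr (l, h)) = bw l h"

fun okS :: "('g::linorder) + ('g option \<times> 'g option) \<Rightarrow> bool" where
  "okS (Inl a) = True"
| "okS (Inr (l, h)) = (\<forall>x\<in>set_option l. \<forall>y\<in>set_option h. x < y)"

fun pts :: "('g::linorder) + ('g option \<times> 'g option) \<Rightarrow> 'g set" where
  "pts (Inl a) = {a}"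
| "pts (Inr (l, h)) = set_option l \<union> set_option h"

lemma finite_pts: "finite (pts s)"
  by (cases s rule: pts.cases) auto

lemma psi_formula:
  assumes "okS s" "finite P" "pts s \<subseteq> P"
  shows "psi s = (\<Sum>p\<in>P. ind s p - germ s p) + topv s"
proof (cases s rule: pts.cases)
  case (1 a)
  have "(\<Sum>p\<in>P. ind s p - germ s p) = (\<Sum>p\<in>P. if p = a then 1 else 0)"
    using 1 by (intro sum.cong) auto
  also have "\<dots> = 1" using assms 1 by (simp add: sum.delta)
  finally show ?thesis using 1 by simp
next
  case (2 l h)
  show ?thesis
  proof (cases l)
    case None
    have "(\<Sum>p\<in>P. ind s p - germ s p) = 0"
      using 2 None by (intro sum.neutral) auto
    then show ?thesis using 2 None by (simp add: bw_def)
  next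
    case (Some a)
    have "(\<Sum>p\<in>P. ind s p - germ s p) = (\<Sum>p\<in>P. if p = a then -1 else 0)"
      using 2 Some assms(1) by (intro sum.cong) (auto simp: less_le)
    also have "\<dots> = -1" using assms 2 Some by (simp add: sum.delta)
    finally show ?thesis using 2 Some by (simp add: bw_def)
  qed
qed

context dlo begin

lemma t_after:
  assumes "finite (P::'g set)"
  shows "\<exists>t. p < t \<and> (\<forall>q\<in>P. (q < t \<longleftrightarrow> q \<le> p) \<and> (t < q \<longleftrightarrow> p < q) \<and> t \<noteq> q)"
proof (cases "{q\<in>P. p < q} = {}")
  case True
  obtain t where "p < t" using ne[of p] by blast
  then show ?thesis using True by (intro exI[of _ t]) (auto simp: not_less intro: order.strict_trans1)
next
  case False
  let ?m = "Min {q\<in>P. p < q}"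
  have fin: "finite {q\<in>P. p < q}" using assms by simp
  have m: "?m \<in> {q\<in>P. p < q}" using Min_in[OF fin False] .
  obtain t where t: "p < t" "t < ?m" using dn[of p ?m] m by blast
  have "\<forall>q\<in>P. p < q \<longrightarrow> ?m \<le> q" using Min_le[OF fin] by blast
  then show ?thesis using t by (intro exI[of _ t]) (metis leD leI order.strict_trans order.strict_trans2 order_less_imp_le)
qed

lemma t_top:
  assumes "finite (P::'g set)"
  shows "\<exists>t. \<forall>q\<in>P. q < t"
proof (cases "P = {}")
  case True then show ?thesis by auto
next
  case False
  obtain t where "Max P < t" using ne[of "Max P"] by blast
  then show ?thesis using Max_ge[OF assms] by (meson le_less_trans)
qed

lemma oneD:
  fixes s :: "'i \<Rightarrow> 'g + ('g option \<times> 'g option)"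
  assumes I: "finite I" and ok: "\<forall>i\<in>I. okS (s i)"
    and z: "\<forall>t. (\<Sum>i\<in>I. c i * ind (s i) t) = 0"
  shows "(\<Sum>i\<in>I. c i * psi (s i)) = 0"
proof -
  define P where "P = (\<Union>i\<in>I. pts (s i))"
  have P: "finite P" unfolding P_def using I finite_pts by blast
  have G: "(\<Sum>i\<in>I. c i * germ (s i) p) = 0" for p
  proof -
    obtain t where t: "p < t" "\<forall>q\<in>P. (q < t \<longleftrightarrow> q \<le> p) \<and> (t < q \<longleftrightarrow> p < q) \<and> t \<noteq> q"
      using t_after[OF P] by blast
    have "ind (s i) t = germ (s i) p" if i: "i \<in> I" for i
    proof -
      have sub: "pts (s i) \<subseteq> P" unfolding P_def using i by blast
      show ?thesis
      proof (cases "s i" rule: pts.cases)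
        case (1 a) then show ?thesis using sub t by auto
      next
        case (2 l h)
        have "(\<forall>x\<in>set_option l. x < t) \<longleftrightarrow> (\<forall>x\<in>set_option l. x \<le> p)" using sub t 2 by auto
        moreover have "(\<forall>y\<in>set_option h. t < y) \<longleftrightarrow> (\<forall>y\<in>set_option h. p < y)" using sub t 2 by auto
        ultimately show ?thesis using 2 by simp
      qed
    qed
    then have "(\<Sum>i\<in>I. c i * germ (s i) p) = (\<Sum>i\<in>I. c i * ind (s i) t)" by simp
    then show ?thesis using z by simp
  qed
  have T: "(\<Sum>i\<in>I. c i * topv (s i)) = 0"
  proof -
    obtain t where t: "\<forall>q\<in>P. q < t" using t_top[OF P] by blast
    have "ind (s i) t = topv (s i)" if i: "i \<in> I" for i
    proof -
      have sub: "pts (s i) \<subseteq> P" unfolding P_def using i by blast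
      show ?thesis
      proof (cases "s i" rule: pts.cases)
        case (1 a) then show ?thesis using sub t by auto
      next
        case (2 l h)
        show ?thesis using sub t 2 by (cases h) (auto dest: less_asym)
      qed
    qed
    then have "(\<Sum>i\<in>I. c i * topv (s i)) = (\<Sum>i\<in>I. c i * ind (s i) t)" by simp
    then show ?thesis using z by simp
  qed
  have "(\<Sum>i\<in>I. c i * psi (s i)) = (\<Sum>i\<in>I. c i * ((\<Sum>p\<in>P. ind (s i) p - germ (s i) p) + topv (s i)))"
  proof (rule sum.cong)
    fix i assume i: "i \<in> I"
    have "pts (s i) \<subseteq> P" unfolding P_def using i by blast
    then show "c i * psi (s i) = c i * ((\<Sum>p\<in>P. ind (s i) p - germ (s i) p) + topv (s i))"
      using psi_formula[OF _ P] ok i by simp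
  qed simp
  also have "\<dots> = (\<Sum>p\<in>P. (\<Sum>i\<in>I. c i * ind (s i) p)) - (\<Sum>p\<in>P. (\<Sum>i\<in>I. c i * germ (s i) p)) + (\<Sum>i\<in>I. c i * topv (s i))"
    by (simp add: algebra_simps sum.distrib sum_subtractf sum_distrib_left sum.swap[of _ P I])
  also have "\<dots> = 0" using z G T by simp
  finally show ?thesis .
qed

end

context dlo begin

lemma cell_decomp1:
  assumes "cellD Def (Suc N) d C" "\<not> exceptional Def (Suc N) C"
  shows "\<exists>B s \<phi>. is_cell Def N B \<and> \<not> exceptional Def N B \<and> wt Def (Suc N) C = wt Def N B * \<phi> \<and>
     (\<forall>x\<in>B. okS (s x) \<and> psi (s x) = \<phi>) \<and>
     (\<forall>x t. (if x @ [t] \<in> C then 1 else 0) = (if x \<in> B then ind (s x) t else 0))"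
  using assms(1)
proof (cases rule: cellD_SucE)
  case (graph B f)
  note L = LD_graph[OF graph(1,4,2,3)]
  show ?thesis
    apply (rule exI[of _ B], rule exI[of _ "\<lambda>x. Inl (f x)"], rule exI[of _ 1])
    using graph(1,4) L assms(2) by (auto simp: is_cell_def)
next
  case (band dB B lo hi)
  note L = LD_band[OF band(1,3,4,5,6)]
  show ?thesis
    apply (rule exI[of _ B], rule exI[of _ "\<lambda>x. Inr (map_option (\<lambda>f. f x) lo, map_option (\<lambda>g. g x) hi)"],
       rule exI[of _ "bw lo hi"])
    using band(1,5,6) L assms(2) by (auto simp: is_cell_def bw_def)
qed

lemma wt0: "wt Def 0 {[]} = 1"
proof -
  have "good Def 0 {[]}" unfolding good_alt exc_alt by auto
  moreover have "cell_dim Def 0 {[]} = 0" using cell_dim_eq[OF cellD.base] .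
  ultimately show ?thesis by (simp add: wt_def)
qed

lemma INV:
  "\<forall>(I::'i set) C c. finite I \<longrightarrow> (\<forall>i\<in>I. is_cell Def N (C i) \<and> \<not> exceptional Def N (C i)) \<longrightarrow>
     (\<forall>x. (\<Sum>i\<in>I. c i * (if x \<in> C i then 1 else 0)) = (0::int)) \<longrightarrow>
     (\<Sum>i\<in>I. c i * wt Def N (C i)) = 0"
proof (induction N)
  case 0
  show ?case
  proof (intro allI impI)
    fix I :: "'i set" and C c
    assume I: "finite I" and cells: "\<forall>i\<in>I. is_cell Def 0 (C i) \<and> \<not> exceptional Def 0 (C i)"
      and z: "\<forall>x. (\<Sum>i\<in>I. c i * (if x \<in> C i then 1 else 0)) = (0::int)"
    have Ci: "C i = {[]}" if "i \<in> I" for i using cells that cellD_0 unfolding is_cell_def by blast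
    have "(\<Sum>i\<in>I. c i * wt Def 0 (C i)) = (\<Sum>i\<in>I. c i * (if [] \<in> C i then 1 else 0))"
      using Ci wt0 by (intro sum.cong) auto
    then show "(\<Sum>i\<in>I. c i * wt Def 0 (C i)) = 0" using z by simp
  qed
next
  case (Suc N)
  show ?case
  proof (intro allI impI)
    fix I :: "'i set" and C c
    assume I: "finite I" and cells: "\<forall>i\<in>I. is_cell Def (Suc N) (C i) \<and> \<not> exceptional Def (Suc N) (C i)"
      and z: "\<forall>x. (\<Sum>i\<in>I. c i * (if x \<in> C i then 1 else 0)) = (0::int)"
    have "\<forall>i\<in>I. \<exists>B s \<phi>. is_cell Def N B \<and> \<not> exceptional Def N B \<and> wt Def (Suc N) (C i) = wt Def N B * \<phi> \<and>
     (\<forall>x\<in>B. okS (s x) \<and> psi (s x) = \<phi>) \<and>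
     (\<forall>x t. (if x @ [t] \<in> C i then 1 else 0) = (if x \<in> B then ind (s x) t else 0))"
      using cells cell_decomp1 unfolding is_cell_def by blast
    then obtain B s \<phi> where BS: "\<forall>i\<in>I. is_cell Def N (B i) \<and> \<not> exceptional Def N (B i) \<and> wt Def (Suc N) (C i) = wt Def N (B i) * \<phi> i \<and>
     (\<forall>x\<in>B i. okS (s i x) \<and> psi (s i x) = \<phi> i) \<and>
     (\<forall>x t. (if x @ [t] \<in> C i then 1 else 0) = (if x \<in> B i then ind (s i x) t else 0))"
      by metis
    have zB: "(\<Sum>i\<in>I. (c i * \<phi> i) * (if x \<in> B i then 1 else 0)) = 0" for x
    proof -
      let ?Ix = "{i\<in>I. x \<in> B i}"
      have fx: "finite ?Ix" using I by simp
      have "(\<Sum>i\<in>?Ix. c i * ind (s i x) t) = 0" for t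
      proof -
        have "(\<Sum>i\<in>?Ix. c i * ind (s i x) t) = (\<Sum>i\<in>I. c i * (if x \<in> B i then ind (s i x) t else 0))"
          unfolding sum.inter_filter[OF I] by (intro sum.cong) auto
        also have "\<dots> = (\<Sum>i\<in>I. c i * (if x @ [t] \<in> C i then 1 else 0))"
          using BS by (intro sum.cong) auto
        finally show ?thesis using z by simp
      qed
      then have "(\<Sum>i\<in>?Ix. c i * psi (s i x)) = 0"
        using oneD[OF fx, of "\<lambda>i. s i x" c] BS by auto
      moreover have "(\<Sum>i\<in>?Ix. c i * psi (s i x)) = (\<Sum>i\<in>I. (c i * \<phi> i) * (if x \<in> B i then 1 else 0))"
      proof -
        have "(\<Sum>i\<in>?Ix. c i * psi (s i x)) = (\<Sum>i\<in>?Ix. c i * \<phi> i)" using BS by (intro sum.cong) auto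
        also have "\<dots> = (\<Sum>i\<in>I. (c i * \<phi> i) * (if x \<in> B i then 1 else 0))"
          unfolding sum.inter_filter[OF I] by (intro sum.cong) auto
        finally show ?thesis .
      qed
      ultimately show ?thesis by simp
    qed
    have "(\<Sum>i\<in>I. (c i * \<phi> i) * wt Def N (B i)) = 0"
      using Suc.IH[rule_format, OF I, of B "\<lambda>i. c i * \<phi> i"] BS zB by blast
    moreover have "(\<Sum>i\<in>I. c i * wt Def (Suc N) (C i)) = (\<Sum>i\<in>I. (c i * \<phi> i) * wt Def N (B i))"
      using BS by (intro sum.cong) auto
    ultimately show "(\<Sum>i\<in>I. c i * wt Def (Suc N) (C i)) = 0" by simp
  qed
qed

lemma part_count:
  assumes "nonexc_partition Def N Z F"
  shows "(\<Sum>C\<in>F. (if x \<in> C then 1 else 0)) = (if x \<in> Z then 1 else (0::int))"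
proof (cases "x \<in> Z")
  case True
  then obtain C0 where C0: "C0 \<in> F" "x \<in> C0" using assms unfolding nonexc_partition_def by auto
  have "(\<Sum>C\<in>F. (if x \<in> C then 1 else (0::int))) = (\<Sum>C\<in>F. (if C = C0 then 1 else 0))"
    using assms C0 unfolding nonexc_partition_def by (intro sum.cong) auto
  also have "\<dots> = 1" using C0 assms unfolding nonexc_partition_def by simp
  finally show ?thesis using True by simp
next
  case False
  then show ?thesis using assms unfolding nonexc_partition_def by (intro trans[OF sum.neutral]) auto
qed

lemma part_inv:
  assumes F1: "nonexc_partition Def N Z F1" and F2: "nonexc_partition Def N Z F2"
  shows "(\<Sum>C\<in>F1. wt Def N C) = (\<Sum>C\<in>F2. wt Def N C)"
proof -
  have fin: "finite F1" "finite F2" using F1 F2 unfolding nonexc_partition_def by auto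
  let ?I = "F1 <+> F2"
  let ?C = "case_sum id id :: 'g list set + 'g list set \<Rightarrow> 'g list set"
  let ?c = "case_sum (\<lambda>_. 1) (\<lambda>_. -1) :: 'g list set + 'g list set \<Rightarrow> int"
  have a1: "finite ?I" using fin by simp
  have a2: "\<forall>i\<in>?I. is_cell Def N (?C i) \<and> \<not> exceptional Def N (?C i)"
      using F1 F2 unfolding nonexc_partition_def by auto
  have a3: "\<forall>x. (\<Sum>i\<in>?I. ?c i * (if x \<in> ?C i then 1 else 0)) = 0"
  proof
    fix x
    show "(\<Sum>i\<in>?I. ?c i * (if x \<in> ?C i then 1 else 0)) = 0"
      using part_count[OF F1, of x] part_count[OF F2, of x] fin by (simp add: sum.Plus comp_def sum_negf)
  qed
  have "(\<Sum>i\<in>?I. ?c i * wt Def N (?C i)) = 0"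
    using INV a1 a2 a3 by blast
  then show ?thesis using fin by (simp add: sum.Plus comp_def sum_negf)
qed

lemma nep_finite: "nonexc_partition Def N Z F \<Longrightarrow> finite F"
  unfolding nonexc_partition_def by simp

lemma chi_b_eq:
  assumes "nonexc_partition Def N Z F"
  shows "chi_b Def N Z = (\<Sum>C\<in>F. wt Def N C)"
proof -
  let ?F = "SOME F. nonexc_partition Def N Z F"
  have F: "nonexc_partition Def N Z ?F" using someI[of "nonexc_partition Def N Z", OF assms] .
  have fin: "finite ?F" using nep_finite[OF F] .
  have "chi_b Def N Z = (\<Sum>C\<in>?F. wt Def N C)"
    unfolding chi_b_def Let_def wt_def sum.inter_filter[OF fin] ..
  also have "\<dots> = (\<Sum>C\<in>F. wt Def N C)" using part_inv[OF F assms] .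
  finally show ?thesis .
qed

end

locale omg = dlo Def for Def :: "nat \<Rightarrow> ('g::linordered_ab_group_add) list set set" +
  assumes om: "omin_group_expansion Def"
begin

lemma om1: "\<forall>n. \<forall>A\<in>Def n. A \<subseteq> Gpow n"
  using om unfolding omin_group_expansion_def by (elim conjE) assumption

lemma om2: "\<forall>n. Gpow n \<in> Def n"
  using om unfolding omin_group_expansion_def by (elim conjE) assumption

lemma om3: "\<forall>n. \<forall>A\<in>Def n. \<forall>B\<in>Def n. A \<union> B \<in> Def n"
  using om unfolding omin_group_expansion_def by (elim conjE) assumption

lemma om4: "\<forall>n. \<forall>A\<in>Def n. Gpow n - A \<in> Def n"
  using om unfolding omin_group_expansion_def by (elim conjE) assumption

lemma om5: "\<forall>n. \<forall>A\<in>Def n. {xs @ [t] | xs t. xs \<in> A} \<in> Def (Suc n)"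
  using om unfolding omin_group_expansion_def by (elim conjE) assumption

lemma om6: "\<forall>n. \<forall>A\<in>Def n. {t # xs | xs t. xs \<in> A} \<in> Def (Suc n)"
  using om unfolding omin_group_expansion_def by (elim conjE) assumption

lemma om7: "\<forall>a. {[a]} \<in> Def 1"
  using om unfolding omin_group_expansion_def by (elim conjE) assumption

lemma Def_sub: "A \<in> Def n \<Longrightarrow> A \<subseteq> Gpow n"
  using om1 by blast

lemma Def_Gpow: "Gpow n \<in> Def n"
  using om2 by blast

lemma Def_un: "A \<in> Def n \<Longrightarrow> B \<in> Def n \<Longrightarrow> A \<union> B \<in> Def n"
  using om3 by blast

lemma Def_compl: "A \<in> Def n \<Longrightarrow> Gpow n - A \<in> Def n"
  using om4 by blast

lemma Def_ext: assumes "A \<in> Def n" shows "{xs @ [t] | xs t. xs \<in> A} \<in> Def (Suc n)"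
proof -
  have "\<forall>A\<in>Def n. {xs @ [t] | xs t. xs \<in> A} \<in> Def (Suc n)" using om5 by (rule spec)
  then show ?thesis using assms by (rule bspec)
qed

lemma Def_cons: assumes "A \<in> Def n" shows "{t # xs | xs t. xs \<in> A} \<in> Def (Suc n)"
proof -
  have "\<forall>A\<in>Def n. {t # xs | xs t. xs \<in> A} \<in> Def (Suc n)" using om6 by (rule spec)
  then show ?thesis using assms by (rule bspec)
qed

lemma Def_pt1: "{[a]} \<in> Def 1"
  using om7 by (rule spec)

lemma Def_int:
  assumes "A \<in> Def n" "B \<in> Def n" shows "A \<inter> B \<in> Def n"
proof -
  have "A \<inter> B = Gpow n - ((Gpow n - A) \<union> (Gpow n - B))" using Def_sub[OF assms(1)] by blast
  then show ?thesis using assms Def_un Def_compl by metis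
qed

lemma Def_L: "{zs @ [t] | zs. length zs = j} \<in> Def (Suc j)"
proof (induction j)
  case 0 then show ?case using Def_pt1[of t] by simp
next
  case (Suc j)
  have "{zs @ [t] | zs. length zs = Suc j} = {x # xs | xs x. xs \<in> {zs @ [t] | zs. length zs = j}}"
  proof (intro set_eqI iffI)
    fix y assume "y \<in> {zs @ [t] | zs. length zs = Suc j}"
    then obtain zs where "y = zs @ [t]" "length zs = Suc j" by auto
    then show "y \<in> {x # xs | xs x. xs \<in> {zs @ [t] | zs. length zs = j}}"
      by (cases zs) auto
  next
    fix y assume "y \<in> {x # xs | xs x. xs \<in> {zs @ [t] | zs. length zs = j}}"
    then show "y \<in> {zs @ [t] | zs. length zs = Suc j}" by force
  qed
  then show ?case using Def_cons[OF Suc.IH] by simp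
qed

lemma Def_point: "{a} \<in> Def (length a)"
proof (induction a rule: rev_induct)
  case Nil
  have "Gpow 0 = {[]::'g list}" by (auto simp: Gpow_def)
  then show ?case using Def_Gpow[of 0] by simp
next
  case (snoc t a)
  have "{a @ [t]} = {xs @ [s] | xs s. xs \<in> {a}} \<inter> {zs @ [t] | zs. length zs = length a}" by auto
  then show ?case using Def_int[OF Def_ext[OF snoc.IH] Def_L] by simp
qed

lemma Def_T: "length a = m \<Longrightarrow> {ys \<in> Gpow (m + j). take m ys = a} \<in> Def (m + j)"
proof (induction j)
  case 0
  have "{ys \<in> Gpow (m + 0). take m ys = a} = {a}" using 0 by (auto simp: Gpow_def)
  then show ?case using Def_point[of a] 0 by simp
next
  case (Suc j)
  have "{ys \<in> Gpow (m + Suc j). take m ys = a} = {xs @ [t] | xs t. xs \<in> {ys \<in> Gpow (m + j). take m ys = a}}"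
  proof (intro set_eqI iffI)
    fix y assume y: "y \<in> {ys \<in> Gpow (m + Suc j). take m ys = a}"
    then have "y \<noteq> []" by (auto simp: Gpow_def)
    then have "y = butlast y @ [last y]" by simp
    moreover have "butlast y \<in> {ys \<in> Gpow (m + j). take m ys = a}"
      using y by (auto simp: Gpow_def take_butlast)
    ultimately show "y \<in> {xs @ [t] | xs t. xs \<in> {ys \<in> Gpow (m + j). take m ys = a}}" by blast
  next
    fix y assume "y \<in> {xs @ [t] | xs t. xs \<in> {ys \<in> Gpow (m + j). take m ys = a}}"
    then show "y \<in> {ys \<in> Gpow (m + Suc j). take m ys = a}" by (auto simp: Gpow_def)
  qed
  then show ?case using Def_ext[OF Suc.IH[OF Suc.prems]] by simp
qed

lemma def_fun_fib:
  assumes f: "def_fun Def N C f" and a: "length a = m" and mN: "m \<le> N" and CG: "C \<subseteq> Gpow N"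
  shows "def_fun Def N {xs \<in> C. take m xs = a} f"
proof -
  have eq: "{xs @ [f xs] | xs. xs \<in> {xs \<in> C. take m xs = a}} =
        {xs @ [f xs] | xs. xs \<in> C} \<inter> {ys \<in> Gpow (m + (Suc N - m)). take m ys = a}"
    using CG mN by (auto simp: Gpow_def subset_iff)
  have "m + (Suc N - m) = Suc N" using mN by simp
  then have T: "{ys \<in> Gpow (m + (Suc N - m)). take m ys = a} \<in> Def (Suc N)"
    using Def_T[OF a, of "Suc N - m"] by simp
  show ?thesis using Def_int[OF f[unfolded def_fun_def] T] unfolding def_fun_def eq .
qed

lemma cont_sub: "cont_on_G n A f \<Longrightarrow> A' \<subseteq> A \<Longrightarrow> cont_on_G n A' f"
  unfolding cont_on_G_def by (meson subsetD)

lemma point_cell: "cellD Def (length a) 0 {a} \<and> \<not> exceptional Def (length a) {a} \<and> wt Def (length a) {a} = 1"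
proof (induction a rule: rev_induct)
  case Nil
  have "\<not> exceptional Def 0 {[]}" unfolding exc_alt by auto
  then show ?case using cellD.base wt0 by simp
next
  case (snoc t a)
  let ?n = "length a"
  have eq: "{a @ [t]} = {xs @ [(\<lambda>_. t) xs] | xs. xs \<in> {a}}" by auto
  have P: "{a @ [t]} \<in> Def (Suc ?n)" using Def_point[of "a @ [t]"] by simp
  have df: "def_fun Def ?n {a} (\<lambda>_. t)" unfolding def_fun_def using P unfolding eq .
  have ct: "cont_on_G ?n {a} (\<lambda>_. t)" unfolding cont_on_G_def by auto
  have c0: "cellD Def (Suc ?n) 0 {xs @ [(\<lambda>_. t) xs] | xs. xs \<in> {a}}"
    using cellD.graph[OF conjunct1[OF snoc.IH] df ct] .
  have c: "cellD Def (Suc ?n) 0 {a @ [t]}" using c0 unfolding eq[symmetric] .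
  note L = LD_graph[OF conjunct1[OF snoc.IH] eq df ct]
  have "\<not> exceptional Def (Suc ?n) {a @ [t]}" "wt Def (Suc ?n) {a @ [t]} = 1" using L snoc.IH by simp_all
  then show ?case using c by simp
qed

definition fib :: "'g list \<Rightarrow> nat \<Rightarrow> 'g list set \<Rightarrow> 'g list set" where
  "fib a m C = {xs \<in> C. take m xs = a}"

lemma fibre_lemma:
  "\<forall>C d. cellD Def (m + j) d C \<longrightarrow> \<not> exceptional Def (m + j) C \<longrightarrow>
     (\<forall>a\<in>proj m C. is_cell Def (m + j) (fib a m C) \<and> \<not> exceptional Def (m + j) (fib a m C) \<and>
         wt Def (m + j) C = wt Def m (proj m C) * wt Def (m + j) (fib a m C)) \<and>
     (\<forall>a\<in>proj m C. \<forall>a'\<in>proj m C. wt Def (m + j) (fib a m C) = wt Def (m + j) (fib a' m C))"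
proof (induction j)
  case 0
  show ?case
  proof (intro allI impI conjI ballI)
    fix C d a a' assume C: "cellD Def (m + 0) d C" and a: "a \<in> proj m C"
    have CG: "C \<subseteq> Gpow m" using cellD_len[OF C] by simp
    have pC: "proj m C = C" using proj_full[OF CG] .
    have la: "length a = m" using a pC CG by (auto simp: Gpow_def)
    have fa: "fib a m C = {a}" using a pC CG by (auto simp: fib_def Gpow_def)
    note P = point_cell[of a]
    show "is_cell Def (m + 0) (fib a m C)" using P fa la by (auto simp: is_cell_def)
    show "\<not> exceptional Def (m + 0) (fib a m C)" using P fa la by simp
    show "wt Def (m + 0) C = wt Def m (proj m C) * wt Def (m + 0) (fib a m C)" using P fa la pC by simp
    assume a': "a' \<in> proj m C"
    have la': "length a' = m" using a' pC CG by (auto simp: Gpow_def)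
    have fa': "fib a' m C = {a'}" using a' pC CG by (auto simp: fib_def Gpow_def)
    show "wt Def (m + 0) (fib a m C) = wt Def (m + 0) (fib a' m C)"
      using P point_cell[of a'] fa fa' la la' by simp
  qed
next
  case (Suc j)
  let ?N = "m + j"
  show ?case unfolding add_Suc_right
  proof (intro allI impI)
    fix C d assume C: "cellD Def (Suc ?N) d C" and nex: "\<not> exceptional Def (Suc ?N) C"
    from C show "(\<forall>a\<in>proj m C. is_cell Def (Suc ?N) (fib a m C) \<and> \<not> exceptional Def (Suc ?N) (fib a m C) \<and>
         wt Def (Suc ?N) C = wt Def m (proj m C) * wt Def (Suc ?N) (fib a m C)) \<and>
     (\<forall>a\<in>proj m C. \<forall>a'\<in>proj m C. wt Def (Suc ?N) (fib a m C) = wt Def (Suc ?N) (fib a' m C))"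
    proof (cases rule: cellD_SucE)
      case (graph B f)
      note L = LD_graph[OF graph(1,4,2,3)]
      have BG: "B \<subseteq> Gpow ?N" using cellD_len[OF graph(1)] .
      have pB: "proj m C = proj m B"
        using graph_facts[OF graph(1,4)] proj_proj[of m ?N C] by simp
      have nexB: "\<not> exceptional Def ?N B" using L nex by simp
      note IH = Suc.IH[rule_format, OF graph(1) nexB]
      have fibC: "fib a m C = {xs @ [f xs] | xs. xs \<in> fib a m B}" for a
        using BG unfolding graph(4) fib_def by (auto simp: Gpow_def subset_iff)
      have fibB: "\<exists>d'. cellD Def ?N d' (fib a m B) \<and> \<not> exceptional Def ?N (fib a m B)"
        if "a \<in> proj m B" for a using IH that unfolding is_cell_def by blast
      have la: "length a = m" if "a \<in> proj m B" for a
        using that BG unfolding proj_def Gpow_def by auto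
      have sub: "fib a m B \<subseteq> B" for a unfolding fib_def by auto
      have LF: "(exceptional Def (Suc ?N) (fib a m C) \<longleftrightarrow> exceptional Def ?N (fib a m B)) \<and>
                wt Def (Suc ?N) (fib a m C) = wt Def ?N (fib a m B) \<and> is_cell Def (Suc ?N) (fib a m C)"
        if a: "a \<in> proj m B" for a
      proof -
        obtain d' where d': "cellD Def ?N d' (fib a m B)" using fibB[OF a] by blast
        have df: "def_fun Def ?N (fib a m B) f" using def_fun_fib[OF graph(2) la[OF a] _ BG] unfolding fib_def by simp
        have ct: "cont_on_G ?N (fib a m B) f" using cont_sub[OF graph(3) sub] .
        note LL = LD_graph[OF d' fibC df ct]
        have "cellD Def (Suc ?N) d' (fib a m C)" using cellD.graph[OF d' df ct] fibC by simp
        then show ?thesis using LL unfolding is_cell_def by blast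
      qed
      show ?thesis unfolding pB
      proof (intro conjI ballI)
        fix a assume a: "a \<in> proj m B"
        have I1: "\<not> exceptional Def ?N (fib a m B)" "wt Def ?N B = wt Def m (proj m B) * wt Def ?N (fib a m B)"
          using conjunct1[OF IH] a by blast+
        note LFa = LF[OF a]
        show "is_cell Def (Suc ?N) (fib a m C)" using LFa by blast
        show "\<not> exceptional Def (Suc ?N) (fib a m C)" using LFa I1(1) by blast
        show "wt Def (Suc ?N) C = wt Def m (proj m B) * wt Def (Suc ?N) (fib a m C)"
          using L(2) I1(2) LFa by simp
      next
        fix a a' assume a: "a \<in> proj m B" and a': "a' \<in> proj m B"
        have "wt Def ?N (fib a m B) = wt Def ?N (fib a' m B)" using conjunct2[OF IH] a a' by blast
        then show "wt Def (Suc ?N) (fib a m C) = wt Def (Suc ?N) (fib a' m C)"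
          using LF[OF a] LF[OF a'] by simp
      qed
    next
      case (band dB B lo hi)
      note L = LD_band[OF band(1,3,4,5,6)]
      have BG: "B \<subseteq> Gpow ?N" using cellD_len[OF band(1)] .
      have pB: "proj m C = proj m B"
        using band_facts[OF band(1,3,4,5,6)] proj_proj[of m ?N C] by simp
      have nexB: "\<not> exceptional Def ?N B" and nn: "\<not> (lo = None \<and> hi = None)" using L(1) nex by simp_all
      note IH = Suc.IH[rule_format, OF band(1) nexB]
      have fibC: "fib a m C = {xs @ [t] | xs t. xs \<in> fib a m B \<and> (\<forall>f\<in>set_option lo. f xs < t) \<and> (\<forall>g\<in>set_option hi. t < g xs)}" for a
        using BG unfolding band(6) fib_def by (auto simp: Gpow_def subset_iff)
      have fibB: "\<exists>d'. cellD Def ?N d' (fib a m B) \<and> \<not> exceptional Def ?N (fib a m B)"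
        if "a \<in> proj m B" for a using IH that unfolding is_cell_def by blast
      have la: "length a = m" if "a \<in> proj m B" for a
        using that BG unfolding proj_def Gpow_def by auto
      have sub: "fib a m B \<subseteq> B" for a unfolding fib_def by auto
      have LF: "\<not> exceptional Def (Suc ?N) (fib a m C) \<and>
                wt Def (Suc ?N) (fib a m C) = wt Def ?N (fib a m B) * bw lo hi \<and> is_cell Def (Suc ?N) (fib a m C)"
        if a: "a \<in> proj m B" for a
      proof -
        obtain d' where d': "cellD Def ?N d' (fib a m B)" and nexF: "\<not> exceptional Def ?N (fib a m B)" using fibB[OF a] by blast
        have lo': "\<forall>f\<in>set_option lo. def_fun Def ?N (fib a m B) f \<and> cont_on_G ?N (fib a m B) f"
          using band(3) def_fun_fib[OF _ la[OF a] _ BG] cont_sub[OF _ sub] unfolding fib_def by simp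
        have hi': "\<forall>g\<in>set_option hi. def_fun Def ?N (fib a m B) g \<and> cont_on_G ?N (fib a m B) g"
          using band(4) def_fun_fib[OF _ la[OF a] _ BG] cont_sub[OF _ sub] unfolding fib_def by simp
        have lh': "\<forall>f\<in>set_option lo. \<forall>g\<in>set_option hi. \<forall>xs\<in>fib a m B. f xs < g xs"
          using band(5) sub by blast
        note LL = LD_band[OF d' lo' hi' lh' fibC]
        have c: "cellD Def (Suc ?N) (Suc d') (fib a m C)" using cellD.band[OF d' lo' hi' lh'] fibC by simp
        have "\<not> exceptional Def (Suc ?N) (fib a m C)" using LL(1) nexF nn by simp
        then show ?thesis using LL(2) c unfolding is_cell_def by blast
      qed
      show ?thesis unfolding pB
      proof (intro conjI ballI)
        fix a assume a: "a \<in> proj m B"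
        have I1: "wt Def ?N B = wt Def m (proj m B) * wt Def ?N (fib a m B)"
          using conjunct1[OF IH] a by blast
        note LFa = LF[OF a]
        show "is_cell Def (Suc ?N) (fib a m C)" using LFa by blast
        show "\<not> exceptional Def (Suc ?N) (fib a m C)" using LFa by blast
        show "wt Def (Suc ?N) C = wt Def m (proj m B) * wt Def (Suc ?N) (fib a m C)"
          using L(2)[OF nex] I1 LFa by simp
      next
        fix a a' assume a: "a \<in> proj m B" and a': "a' \<in> proj m B"
        have "wt Def ?N (fib a m B) = wt Def ?N (fib a' m B)" using conjunct2[OF IH] a a' by blast
        then show "wt Def (Suc ?N) (fib a m C) = wt Def (Suc ?N) (fib a' m C)"
          using LF[OF a] LF[OF a'] by simp
      qed
    qed
  qed
qed

end

lemma cd_props: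
  fixes Def :: "nat \<Rightarrow> ('g::linordered_ab_group_add) list set set"
  assumes "cell_decomp Def K E"
  shows "finite E \<and> \<Union>E = Gpow K \<and> (\<forall>C\<in>E. \<forall>C'\<in>E. C \<noteq> C' \<longrightarrow> C \<inter> C' = {}) \<and> (\<forall>C\<in>E. is_cell Def K C)"
proof (cases K)
  case 0
  then have "E = {{[]}}" using assms by simp
  moreover have "Gpow 0 = {[]::'g list}" by (auto simp: Gpow_def)
  moreover have "is_cell Def 0 {[]}" unfolding is_cell_def using cellD.base by blast
  ultimately show ?thesis using 0 by simp
next
  case (Suc k)
  then show ?thesis using assms by simp
qed

lemma cd_proj: "cell_decomp Def (m + n) D \<Longrightarrow> cell_decomp Def m (proj m ` D)"
proof (induction n arbitrary: D)
  case 0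
  have "\<forall>C\<in>D. C \<subseteq> Gpow m" using cd_props[OF 0[simplified]] by blast
  then have "proj m ` D = D" using proj_full by (metis (no_types, lifting) image_cong image_ident)
  then show ?case using 0 by simp
next
  case (Suc n)
  have "cell_decomp Def (m + n) (proj (m + n) ` D)" using Suc.prems by simp
  then have "cell_decomp Def m (proj m ` proj (m + n) ` D)" using Suc.IH by blast
  moreover have "proj m ` proj (m + n) ` D = proj m ` D"
    by (simp add: image_image proj_proj)
  ultimately show ?case by simp
qed

theorem proposition4p6:
  fixes Def :: "nat \<Rightarrow> ('g::linordered_ab_group_add) list set set"
    and m n :: nat and X :: "'g list set" and D :: "'g list set set"
  assumes "omin_group_expansion Def"
    and "X \<in> Def (m + n)"
    and "cell_decomp Def (m + n) D"
    and "\<forall>C\<in>D. C \<subseteq> X \<or> C \<inter> X = {}"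
    and "\<forall>C\<in>D. \<not> exceptional Def (m + n) C"
    and "\<forall>A\<in>proj m ` D. \<not> exceptional Def m A"
  shows "\<forall>A\<in>proj m ` D. \<exists>e::int.
           (\<forall>a\<in>A. chi_b Def (m + n) {xs \<in> X. take m xs = a} = e) \<and>
           chi_b Def (m + n) {xs \<in> X. take m xs \<in> A} = chi_b Def m A * e"
proof
  interpret omg Def
  proof
    show "omin_group_expansion Def" by (rule assms(1))
    show "\<And>x y::'g. x < y \<Longrightarrow> \<exists>z. x < z \<and> z < y"
      using assms(1) unfolding omin_group_expansion_def by (elim conjE) blast
    show "\<And>x::'g. \<exists>y z. y < x \<and> x < z"
      using assms(1) unfolding omin_group_expansion_def by (elim conjE) blast
  qed
  let ?K = "m + n"
  note DP = cd_props[OF assms(3)]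
  note PP = cd_props[OF cd_proj[OF assms(3)]]
  have XG: "X \<subseteq> Gpow ?K" using Def_sub[OF assms(2)] .
  fix A assume A: "A \<in> proj m ` D"
  define FA where "FA = {C\<in>D. C \<subseteq> X \<and> proj m C = A}"
  have finFA: "finite FA" using DP unfolding FA_def by simp
  have ZA: "{xs \<in> X. take m xs \<in> A} = \<Union>FA"
  proof (intro set_eqI iffI)
    fix xs assume xs: "xs \<in> {xs \<in> X. take m xs \<in> A}"
    then have "xs \<in> Gpow ?K" using XG by auto
    then obtain C where C: "C \<in> D" "xs \<in> C" using DP by blast
    have CX: "C \<subseteq> X" using assms(4) C xs by blast
    have "take m xs \<in> proj m C" using C unfolding proj_def by blast
    then have "proj m C = A" using PP A C(1) xs by blast
    then show "xs \<in> \<Union>FA" using C CX unfolding FA_def by blast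
  next
    fix xs assume "xs \<in> \<Union>FA"
    then obtain C where C: "C \<in> FA" "xs \<in> C" by blast
    then show "xs \<in> {xs \<in> X. take m xs \<in> A}" unfolding FA_def proj_def by blast
  qed
  have FAD: "FA \<subseteq> D" unfolding FA_def by blast
  have Dcell: "\<forall>C\<in>D. is_cell Def ?K C" using conjunct2[OF conjunct2[OF conjunct2[OF DP]]] .
  have Ddisj: "\<forall>C\<in>D. \<forall>C'\<in>D. C \<noteq> C' \<longrightarrow> C \<inter> C' = {}" using conjunct1[OF conjunct2[OF conjunct2[OF DP]]] .
  have Pcell: "\<forall>C\<in>proj m ` D. is_cell Def m C" using conjunct2[OF conjunct2[OF conjunct2[OF PP]]] .
  have cellsFA: "\<forall>C\<in>FA. is_cell Def ?K C \<and> \<not> exceptional Def ?K C"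
  proof
    fix C assume "C \<in> FA"
    then have "C \<in> D" using FAD by blast
    then show "is_cell Def ?K C \<and> \<not> exceptional Def ?K C" using Dcell assms(5) by blast
  qed
  have disjFA: "\<forall>C\<in>FA. \<forall>C'\<in>FA. C \<noteq> C' \<longrightarrow> C \<inter> C' = {}" using Ddisj FAD by blast
  have q2: "\<Union>FA = {xs \<in> X. take m xs \<in> A}" by (rule ZA[symmetric])
  have partA: "nonexc_partition Def ?K {xs \<in> X. take m xs \<in> A} FA"
    unfolding nonexc_partition_def by (intro conjI finFA q2 disjFA cellsFA)
  have chiZA: "chi_b Def ?K {xs \<in> X. take m xs \<in> A} = (\<Sum>C\<in>FA. wt Def ?K C)"
    using chi_b_eq[OF partA] .
  have Acell: "is_cell Def m A" using Pcell A by blast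
  have partAA: "nonexc_partition Def m A {A}"
    unfolding nonexc_partition_def using Acell assms(6) A by auto
  have chiA: "chi_b Def m A = wt Def m A" using chi_b_eq[OF partAA] by simp
  obtain a0 where a0: "a0 \<in> A" using Acell cellD_ne unfolding is_cell_def by blast
  have FL: "(\<forall>a\<in>A. is_cell Def ?K (fib a m C) \<and> \<not> exceptional Def ?K (fib a m C) \<and>
         wt Def ?K C = wt Def m A * wt Def ?K (fib a m C)) \<and>
     (\<forall>a\<in>A. \<forall>a'\<in>A. wt Def ?K (fib a m C) = wt Def ?K (fib a' m C))" if C: "C \<in> FA" for C
  proof -
    obtain d where d: "cellD Def ?K d C" using cellsFA C unfolding is_cell_def by blast
    have pC: "proj m C = A" using C unfolding FA_def by blast
    have nex: "\<not> exceptional Def ?K C" using cellsFA C by blast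
    note R = fibre_lemma[of m n, rule_format, OF d nex]
    show ?thesis using R unfolding pC .
  qed
  define e where "e = (\<Sum>C\<in>FA. wt Def ?K (fib a0 m C))"
  show "\<exists>e::int. (\<forall>a\<in>A. chi_b Def ?K {xs \<in> X. take m xs = a} = e) \<and>
           chi_b Def ?K {xs \<in> X. take m xs \<in> A} = chi_b Def m A * e"
  proof (intro exI conjI ballI)
    fix a assume a: "a \<in> A"
    have Za: "{xs \<in> X. take m xs = a} = \<Union>((\<lambda>C. fib a m C) ` FA)"
    proof -
      have "{xs \<in> X. take m xs = a} = {xs \<in> {xs \<in> X. take m xs \<in> A}. take m xs = a}" using a by auto
      also have "\<dots> = \<Union>((\<lambda>C. fib a m C) ` FA)" unfolding ZA fib_def by blast
      finally show ?thesis .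
    qed
    have fne: "fib a m C \<noteq> {}" if "C \<in> FA" for C
      using FL[OF that] a cellD_ne unfolding is_cell_def by blast
    have inj: "inj_on (\<lambda>C. fib a m C) FA"
    proof (rule inj_onI)
      fix C C' assume C: "C \<in> FA" "C' \<in> FA" and eq: "fib a m C = fib a m C'"
      show "C = C'"
      proof (rule ccontr)
        assume "C \<noteq> C'"
        then have "C \<inter> C' = {}" using disjFA C by blast
        moreover have "fib a m C \<subseteq> C \<inter> C'" using eq unfolding fib_def by blast
        ultimately show False using fne[OF C(1)] by blast
      qed
    qed
    have p1: "finite ((\<lambda>C. fib a m C) ` FA)" using finFA by simp
    have p2: "\<Union>((\<lambda>C. fib a m C) ` FA) = {xs \<in> X. take m xs = a}" by (rule Za[symmetric])
    have p3: "\<forall>E\<in>(\<lambda>C. fib a m C) ` FA. \<forall>E'\<in>(\<lambda>C. fib a m C) ` FA. E \<noteq> E' \<longrightarrow> E \<inter> E' = {}"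
    proof (intro ballI impI)
      fix E E' assume E: "E \<in> (\<lambda>C. fib a m C) ` FA" "E' \<in> (\<lambda>C. fib a m C) ` FA" "E \<noteq> E'"
      then obtain C C' where "C \<in> FA" "C' \<in> FA" "E = fib a m C" "E' = fib a m C'" "C \<noteq> C'" by blast
      then show "E \<inter> E' = {}" using disjFA unfolding fib_def by blast
    qed
    have p4: "\<forall>E\<in>(\<lambda>C. fib a m C) ` FA. is_cell Def ?K E \<and> \<not> exceptional Def ?K E"
    proof
      fix E assume "E \<in> (\<lambda>C. fib a m C) ` FA"
      then obtain C where C: "C \<in> FA" "E = fib a m C" by blast
      have "is_cell Def ?K (fib a m C) \<and> \<not> exceptional Def ?K (fib a m C)"
        using conjunct1[OF FL[OF C(1)]] a by blast
      then show "is_cell Def ?K E \<and> \<not> exceptional Def ?K E" using C(2) by simp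
    qed
    have parta: "nonexc_partition Def ?K {xs \<in> X. take m xs = a} ((\<lambda>C. fib a m C) ` FA)"
      unfolding nonexc_partition_def by (intro conjI p1 p2 p3 p4)
    have "chi_b Def ?K {xs \<in> X. take m xs = a} = (\<Sum>E\<in>(\<lambda>C. fib a m C) ` FA. wt Def ?K E)"
      using chi_b_eq[OF parta] .
    also have "\<dots> = (\<Sum>C\<in>FA. wt Def ?K (fib a m C))" using sum.reindex[OF inj] by simp
    also have "\<dots> = e" unfolding e_def
    proof (rule sum.cong)
      fix C assume C: "C \<in> FA"
      show "wt Def ?K (fib a m C) = wt Def ?K (fib a0 m C)" using conjunct2[OF FL[OF C]] a a0 by blast
    qed simp
    finally show "chi_b Def ?K {xs \<in> X. take m xs = a} = e" .
  next
    have "chi_b Def ?K {xs \<in> X. take m xs \<in> A} = (\<Sum>C\<in>FA. wt Def m A * wt Def ?K (fib a0 m C))"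
      unfolding chiZA
    proof (rule sum.cong)
      fix C assume C: "C \<in> FA"
      show "wt Def ?K C = wt Def m A * wt Def ?K (fib a0 m C)" using conjunct1[OF FL[OF C]] a0 by blast
    qed simp
    also have "\<dots> = chi_b Def m A * e" unfolding chiA e_def by (simp add: sum_distrib_left)
    finally show "chi_b Def ?K {xs \<in> X. take m xs \<in> A} = chi_b Def m A * e" .
  qed
qed


end
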